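(* Let $\Omega\subseteq\mathbb R^n$ be a bounded open set, let $p_j\to\infty$, and for each $j$ let $\xi_{p_j}\in L^{p_j}(\Omega)$ with $\xi_{p_j}\ge0$ a.e. Suppose there is $\xi_\infty\in L^\infty(\Omega)$ with $\xi_{p_j}\rightharpoonup\xi_\infty$ weakly in $L^k(\Omega)$ for every $k\in(1,\infty)$. Then $$\liminf_{j\to\infty}\int_\Omega\xi_{p_j}\,d[\mu_{p_j}(\xi_{p_j})]\ \ge\ \|\xi_\infty\|_{L^\infty(\Omega)}.$$
   Context: $|x|_{(p)}:=\sqrt{|x|^2+p^{-2}}$, $\|f\|_{\dot L^p(\Omega)}:=\big(\frac{1}{\mathcal L^n(\Omega)}\int_\Omega|f|_{(p)}^p\,d\mathcal L^n\big)^{1/p}$, and $\mu_p(\xi):=\dfrac{|\xi|_{(p)}^{p-2}\,\xi}{\mathcal L^n(\Omega)\,\|\xi\|_{\dot L^p(\Omega)}^{p-1}}\,\mathcal L^n\llcorner\Omega$, so that $\int_\Omega\xi\,d[\mu_p(\xi)]=\frac{1}{\mathcal L^n(\Omega)}\int_\Omega\frac{|\xi|_{(p)}^{p-2}\xi^2}{\|\xi\|_{\dot L^p(\Omega)}^{p-1}}\,d\mathcal L^n$. *)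

theory Defs
  imports "HOL-Analysis.Analysis" "HOL-Probability.Essential_Supremum"
begin

definition regabs :: "real \<Rightarrow> real \<Rightarrow> real" where
  "regabs p x = sqrt (x\<^sup>2 + inverse (p\<^sup>2))"

definition dotLp :: "'a::euclidean_space set \<Rightarrow> real \<Rightarrow> ('a \<Rightarrow> real) \<Rightarrow> real" where
  "dotLp \<Omega> p f = ((1 / measure lebesgue \<Omega>) * (LINT x:\<Omega>|lebesgue. regabs p (f x) powr p)) powr (1 / p)"

text \<open>The pairing  int_\<Omega> xi d[mu_p(xi)], with mu_p(xi) the measure of density
  |xi|_(p)^(p-2) xi / (L^n(\<Omega>) ||xi||^(p-1)) w.r.t. Lebesgue measure on \<Omega>.\<close>
definition mu_pairing :: "'a::euclidean_space set \<Rightarrow> real \<Rightarrow> ('a \<Rightarrow> real) \<Rightarrow> real" where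
  "mu_pairing \<Omega> p \<xi> =
     (LINT x:\<Omega>|lebesgue. \<xi> x *
        (regabs p (\<xi> x) powr (p - 2) * \<xi> x / (measure lebesgue \<Omega> * dotLp \<Omega> p \<xi> powr (p - 1))))"

definition in_Lp :: "'a::euclidean_space set \<Rightarrow> real \<Rightarrow> ('a \<Rightarrow> real) \<Rightarrow> bool" where
  "in_Lp \<Omega> q f \<longleftrightarrow> set_borel_measurable lebesgue \<Omega> f \<and> set_integrable lebesgue \<Omega> (\<lambda>x. \<bar>f x\<bar> powr q)"

definition in_Linf :: "'a::euclidean_space set \<Rightarrow> ('a \<Rightarrow> real) \<Rightarrow> bool" where
  "in_Linf \<Omega> f \<longleftrightarrow> set_borel_measurable lebesgue \<Omega> f \<and> (\<exists>C. AE x in lebesgue. x \<in> \<Omega> \<longrightarrow> \<bar>f x\<bar> \<le> C)"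

definition Linf_norm :: "'a::euclidean_space set \<Rightarrow> ('a \<Rightarrow> real) \<Rightarrow> ereal" where
  "Linf_norm \<Omega> f = esssup (restrict_space lebesgue \<Omega>) (\<lambda>x. ereal \<bar>f x\<bar>)"

definition weak_conv_Lk :: "'a::euclidean_space set \<Rightarrow> real \<Rightarrow> (nat \<Rightarrow> 'a \<Rightarrow> real) \<Rightarrow> ('a \<Rightarrow> real) \<Rightarrow> bool" where
  "weak_conv_Lk \<Omega> k f finf \<longleftrightarrow> in_Lp \<Omega> k finf \<and> (\<forall>\<^sub>F j in sequentially. in_Lp \<Omega> k (f j)) \<and>
     (\<forall>g. in_Lp \<Omega> (k / (k - 1)) g \<longrightarrow>
        (\<lambda>j. LINT x:\<Omega>|lebesgue. f j x * g x) \<longlonglongrightarrow> (LINT x:\<Omega>|lebesgue. finf x * g x))"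

end

theory Submission
  imports Defs
begin

lemma regabs_facts:
  assumes "p > 0"
  shows "regabs p x > 0" "regabs p x \<ge> 1/p" "regabs p x \<ge> \<bar>x\<bar>"
    "(regabs p x)\<^sup>2 = x\<^sup>2 + 1/p\<^sup>2" "regabs p x \<le> \<bar>x\<bar> + 1/p"
proof -
  have s: "(regabs p x)\<^sup>2 = x\<^sup>2 + 1/p\<^sup>2" unfolding regabs_def
    by (simp add: field_simps)
  show "(regabs p x)\<^sup>2 = x\<^sup>2 + 1/p\<^sup>2" by (fact s)
  have "sqrt (1/p\<^sup>2) \<le> regabs p x" unfolding regabs_def
    by (simp add: field_simps)
  moreover have "sqrt (1/p\<^sup>2) = 1/p" using assms by (simp add: real_sqrt_divide)
  ultimately show "regabs p x \<ge> 1/p" by simp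
  then show "regabs p x > 0" using assms
    by (smt (verit) divide_pos_pos)
  have "sqrt (x\<^sup>2) \<le> regabs p x" unfolding regabs_def by (intro real_sqrt_le_mono) simp
  then show "regabs p x \<ge> \<bar>x\<bar>" by simp
  have "(\<bar>x\<bar> + 1/p)\<^sup>2 \<ge> (regabs p x)\<^sup>2" unfolding s using assms
    by (simp add: power2_eq_square field_simps)
  then show "regabs p x \<le> \<bar>x\<bar> + 1/p"
    using assms by (smt (verit) abs_ge_zero divide_pos_pos power2_le_imp_le)
qed

lemma powr_tendsto:
  fixes l :: real assumes "l > 1" "filterlim p at_top sequentially"
  shows "filterlim (\<lambda>j. l powr (p j - 1)) at_top sequentially"
proof -
  have "filterlim (\<lambda>j. ln l * (p j - 1)) at_top sequentially"
  proof (intro filterlim_tendsto_pos_mult_at_top[OF tendsto_const])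
    show "0 < ln l" using assms by (simp add: ln_gt_zero)
    have "filterlim (\<lambda>j. -1 + p j) at_top sequentially"
      by (rule filterlim_tendsto_add_at_top[OF tendsto_const assms(2)])
    then show "filterlim (\<lambda>j. p j - 1) at_top sequentially" by simp
  qed
  then have "filterlim (\<lambda>j. exp (ln l * (p j - 1))) at_top sequentially"
    by (rule filterlim_compose[OF exp_at_top])
  then show ?thesis using assms by (simp add: powr_def mult.commute)
qed

lemma sum_powr_bound:
  fixes u v p :: real assumes "0 \<le> u" "0 \<le> v" "0 \<le> p"
  shows "(u + v) powr p \<le> 2 powr p * (u powr p + v powr p)"
proof -
  have "(u + v) powr p \<le> (2 * max u v) powr p"
    using assms by (intro powr_mono2) auto
  also have "\<dots> = 2 powr p * max u v powr p"
    using assms by (simp add: powr_mult)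
  also have "max u v powr p \<le> u powr p + v powr p"
    by (cases "u \<le> v") (auto simp: max_def)
  then have "2 powr p * max u v powr p \<le> 2 powr p * (u powr p + v powr p)"
    by (intro mult_left_mono) auto
  finally show ?thesis .
qed

lemma alg1:
  fixes D N p X P :: real assumes "D > 0" "N > 0" "p > 0"
  shows "((1 - 1/(p\<^sup>2 * N\<^sup>2)) / D) * X - P / (p\<^sup>2 * D) = (X - (P + X / N\<^sup>2) / p\<^sup>2) / D"
  using assms by (simp add: field_simps)

lemma alg2:
  fixes m N P p I :: real assumes "I = m * (N * (N * P))" "m > 0" "N > 0" "P > 0" "p > 0"
  shows "(1 - 1/(p\<^sup>2 * N\<^sup>2)) / (m * (N * P)) * I - P / (p\<^sup>2 * (m * (N * P))) * m = N - 2 / (p\<^sup>2 * N)"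
  using assms by (simp add: field_simps power2_eq_square)

lemma alg3:
  fixes l N al m Q L :: real assumes "Q > 0" "L > 0"
  shows "l * N * al + m * (N * Q) / (L * Q) = N * (l * al + m / L)"
  using assms by (simp add: field_simps)

lemma pairing_bound:
  fixes M :: "'a measure" and f :: "'a \<Rightarrow> real"
  assumes fm: "finite_measure M" and mpos: "0 < measure M (space M)" and p2: "2 \<le> p"
    and fmeas[measurable]: "f \<in> borel_measurable M"
    and fint: "integrable M (\<lambda>x. \<bar>f x\<bar> powr p)"
  defines "m \<equiv> measure M (space M)" and "a \<equiv> \<lambda>x. regabs p (f x)"
  defines "N \<equiv> ((1/m) * integral\<^sup>L M (\<lambda>x. a x powr p)) powr (1/p)"
  shows "integrable M (\<lambda>x. a x powr p)" (is ?A)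
    and "m * N powr p = integral\<^sup>L M (\<lambda>x. a x powr p)" (is ?B)
    and "1/p \<le> N" (is ?C)
    and "N - 2/p \<le> integral\<^sup>L M (\<lambda>x. f x * (a x powr (p-2) * f x / (m * N powr (p-1))))" (is ?D)
proof -
  interpret finite_measure M by fact
  have pp: "p > 0" using p2 by simp
  have ameas[measurable]: "a \<in> borel_measurable M" unfolding a_def regabs_def by measurable
  have af: "a x > 0" "a x \<ge> 1/p" "a x \<ge> \<bar>f x\<bar>" "(a x)\<^sup>2 = (f x)\<^sup>2 + 1/p\<^sup>2" "a x \<le> \<bar>f x\<bar> + 1/p" for x
    unfolding a_def using regabs_facts[OF pp] by auto
  have aint: "integrable M (\<lambda>x. a x powr p)"
  proof (rule Bochner_Integration.integrable_bound)
    show "integrable M (\<lambda>x. 2 powr p * (\<bar>f x\<bar> powr p + (1/p) powr p))"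
      using fint by (intro integrable_mult_right Bochner_Integration.integrable_add) auto
    show "(\<lambda>x. a x powr p) \<in> borel_measurable M" by measurable
    show "AE x in M. norm (a x powr p) \<le> norm (2 powr p * (\<bar>f x\<bar> powr p + (1/p) powr p))"
    proof (intro AE_I2)
      fix x
      have "a x powr p \<le> (\<bar>f x\<bar> + 1/p) powr p"
        using af[of x] pp by (intro powr_mono2) auto
      also have "\<dots> \<le> 2 powr p * (\<bar>f x\<bar> powr p + (1/p) powr p)"
        using pp by (intro sum_powr_bound) auto
      finally show "norm (a x powr p) \<le> norm (2 powr p * (\<bar>f x\<bar> powr p + (1/p) powr p))"
        by simp
    qed
  qed
  then show ?A .
  define I where "I = integral\<^sup>L M (\<lambda>x. a x powr p)"
  have "integral\<^sup>L M (\<lambda>x. (1/p) powr p) \<le> I"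
    unfolding I_def using aint af pp by (intro integral_mono) (auto intro!: powr_mono2)
  then have Ige: "m * (1/p) powr p \<le> I" by (simp add: m_def)
  have mpos': "m > 0" using mpos by (simp add: m_def)
  have IM: "(1/p) powr p \<le> I / m" using Ige mpos' by (simp add: pos_le_divide_eq mult.commute)
  have "0 < (1/p) powr p" using pp by simp
  then have IM0: "0 < I / m" using IM by linarith
  have Np: "N powr p = I / m"
  proof -
    have "0 < I" using IM0 mpos' by (simp add: zero_less_divide_iff)
    have "N powr p = ((1/m) * I) powr ((1/p) * p)" unfolding N_def I_def[symmetric]
      by (simp only: powr_powr)
    also have "\<dots> = I / m" using pp IM0 mpos' \<open>0 < I\<close> by simp
    finally show ?thesis .
  qed
  then show ?B using mpos' by (simp add: I_def)
  have "((1/p) powr p) powr (1/p) \<le> (I/m) powr (1/p)"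
    using IM pp by (intro powr_mono2) auto
  moreover have "((1/p) powr p) powr (1/p) = 1/p"
  proof -
    have "((1/p) powr p) powr (1/p) = (1/p) powr (p * (1/p))" by (simp only: powr_powr)
    also have "\<dots> = 1/p" using pp by simp
    finally show ?thesis .
  qed
  moreover have "N = (I/m) powr (1/p)" unfolding N_def I_def[symmetric] by simp
  ultimately have Nge: "1/p \<le> N" by simp
  then show ?C .
  have Npos: "N > 0" using Nge pp by (smt (verit) divide_pos_pos)
  define P1 where "P1 = N powr (p-1)"
  define P2 where "P2 = N powr (p-2)"
  have P1: "N powr p = N * P1"
  proof -
    have "N powr p = N powr (1 + (p-1))" by simp
    also have "\<dots> = N * P1" unfolding P1_def using Npos by (simp only: powr_add powr_one)
    finally show ?thesis .
  qed
  have P2: "P1 = N * P2"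
  proof -
    have "P1 = N powr (1 + (p-2))" unfolding P1_def by simp
    also have "\<dots> = N * P2" unfolding P2_def using Npos by (simp only: powr_add powr_one)
    finally show ?thesis .
  qed
  have P2pos: "P2 > 0" unfolding P2_def using Npos by simp
  define D where "D = m * P1"
  have Dpos: "D > 0" unfolding D_def using mpos' P2 P2pos Npos by simp
  define al where "al = (1 - 1/(p\<^sup>2 * N\<^sup>2)) / D"
  define be where "be = P2 / (p\<^sup>2 * D)"
  have ap: "a x powr p = a x powr (p-2) * (a x)\<^sup>2" for x
  proof -
    have "a x powr p = a x powr ((p-2) + 2)" by simp
    also have "\<dots> = a x powr (p-2) * a x powr 2" by (simp only: powr_add)
    also have "a x powr 2 = (a x)\<^sup>2" using powr_realpow[of "a x" 2] af(1)[of x] by simp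
    finally show ?thesis .
  qed
  have key: "a x powr (p-2) \<le> P2 + a x powr p / N\<^sup>2" for x
  proof (cases "a x \<le> N")
    case True
    then have "a x powr (p-2) \<le> P2" unfolding P2_def using af(1)[of x] p2
      by (intro powr_mono2) auto
    moreover have "0 \<le> a x powr p / N\<^sup>2" by simp
    ultimately show ?thesis by linarith
  next
    case False
    then have "N\<^sup>2 \<le> (a x)\<^sup>2" using Npos by (intro power_mono) auto
    then have "a x powr (p-2) * N\<^sup>2 \<le> a x powr (p-2) * (a x)\<^sup>2"
      by (intro mult_left_mono) auto
    then have "a x powr (p-2) \<le> a x powr p / N\<^sup>2" unfolding ap using Npos
      by (simp add: field_simps)
    moreover have "0 \<le> P2" using P2pos by simp
    ultimately show ?thesis by linarith
  qed
  define h where "h = (\<lambda>x. f x * (a x powr (p-2) * f x / (m * N powr (p-1))))"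
  have h_eq: "h x = (a x powr p - a x powr (p-2) / p\<^sup>2) / D" for x
  proof -
    have "(f x)\<^sup>2 = (a x)\<^sup>2 - 1/p\<^sup>2" using af(4)[of x] by simp
    have "h x = a x powr (p-2) * (f x)\<^sup>2 / D" unfolding h_def D_def P1_def
      by (simp add: power2_eq_square)
    also have "\<dots> = a x powr (p-2) * ((a x)\<^sup>2 - 1/p\<^sup>2) / D" using \<open>(f x)\<^sup>2 = _\<close> by simp
    also have "\<dots> = (a x powr (p-2) * (a x)\<^sup>2 - a x powr (p-2) / p\<^sup>2) / D"
      by (simp add: right_diff_distrib)
    finally show ?thesis unfolding ap .
  qed
  have hint: "integrable M h"
  proof (rule Bochner_Integration.integrable_bound)
    show "integrable M (\<lambda>x. a x powr p / D)" using aint by auto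
    show "h \<in> borel_measurable M" unfolding h_def by measurable
    show "AE x in M. norm (h x) \<le> norm (a x powr p / D)"
    proof (intro AE_I2)
      fix x
      have "0 \<le> a x powr (p-2) / p\<^sup>2" by simp
      moreover have "a x powr (p-2) / p\<^sup>2 \<le> a x powr p"
      proof -
        have "1/p\<^sup>2 \<le> (a x)\<^sup>2" using power_mono[OF af(2)[of x], of 2] pp by (simp add: power_divide)
        then have "a x powr (p-2) * (1/p\<^sup>2) \<le> a x powr (p-2) * (a x)\<^sup>2"
          by (intro mult_left_mono) auto
        then show ?thesis unfolding ap by simp
      qed
      ultimately show "norm (h x) \<le> norm (a x powr p / D)"
        unfolding h_eq using Dpos by (simp add: divide_right_mono abs_le_iff field_simps)
    qed
  qed
  have glow: "al * a x powr p - be \<le> h x" for x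
  proof -
    have "al * a x powr p - be = (a x powr p - (P2 + a x powr p / N\<^sup>2) / p\<^sup>2) / D"
      unfolding al_def be_def using Dpos Npos pp by (rule alg1)
    also have "\<dots> \<le> (a x powr p - a x powr (p-2) / p\<^sup>2) / D"
      using key[of x] Dpos pp by (intro divide_right_mono) (auto simp: divide_right_mono)
    finally show ?thesis unfolding h_eq .
  qed
  have "integral\<^sup>L M (\<lambda>x. al * a x powr p - be) \<le> integral\<^sup>L M h"
    using glow hint aint by (intro integral_mono) auto
  moreover have "integral\<^sup>L M (\<lambda>x. al * a x powr p - be) = al * I - be * m"
    using aint by (simp add: I_def m_def)
  moreover have "al * I - be * m = N - 2 / (p\<^sup>2 * N)"
  proof -
    have "I = m * (N * (N * P2))" using Np P1 P2 mpos' by (simp add: field_simps)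
    then show ?thesis unfolding al_def be_def D_def P2 using mpos' Npos P2pos pp
      by (intro alg2)
  qed
  moreover have "2 / (p\<^sup>2 * N) \<le> 2 / p"
  proof -
    have "p \<le> p\<^sup>2 * N" using Nge pp by (simp add: field_simps power2_eq_square)
    then show ?thesis using pp Npos by (intro divide_left_mono) auto
  qed
  ultimately show ?D unfolding h_def by linarith
qed

lemma small_le:
  fixes a c p :: real assumes "0 < a" "0 < c" "1 \<le> p"
  shows "a \<le> c + a powr p / c powr (p-1)"
proof (cases "a \<le> c")
  case True
  moreover have "0 \<le> a powr p / c powr (p-1)" by simp
  ultimately show ?thesis by linarith
next
  case False
  have "c powr (p-1) \<le> a powr (p-1)" using False assms by (intro powr_mono2) auto
  then have "a * c powr (p-1) \<le> a * a powr (p-1)" using assms by (intro mult_left_mono) auto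
  also have "a * a powr (p-1) = a powr p"
  proof -
    have "a powr p = a powr (1 + (p-1))" by simp
    also have "\<dots> = a * a powr (p-1)" using assms by (simp only: powr_add powr_one)
    finally show ?thesis by simp
  qed
  finally have "a * c powr (p-1) \<le> a powr p" .
  moreover have "0 < c powr (p-1)" using assms by simp
  ultimately have "a \<le> a powr p / c powr (p-1)" by (simp add: pos_le_divide_eq)
  then show ?thesis using assms by simp
qed

lemma lower_N:
  fixes M :: "'a measure" and f g :: "'a \<Rightarrow> real"
  assumes fm: "finite_measure M" and mpos: "0 < measure M (space M)" and p2: "2 \<le> p"
    and fmeas[measurable]: "f \<in> borel_measurable M"
    and fint: "integrable M (\<lambda>x. \<bar>f x\<bar> powr p)"
    and Asets[measurable]: "A \<in> sets M" and gmeas[measurable]: "g \<in> borel_measurable M"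
    and gle: "\<And>x. x \<in> space M \<Longrightarrow> \<bar>g x\<bar> \<le> indicator A x"
    and lpos: "0 < l"
  defines "m \<equiv> measure M (space M)" and "a \<equiv> \<lambda>x. regabs p (f x)"
  defines "N \<equiv> ((1/m) * integral\<^sup>L M (\<lambda>x. a x powr p)) powr (1/p)"
  shows "integral\<^sup>L M (\<lambda>x. f x * g x) \<le> N * (l * measure M A + m / l powr (p-1))"
proof -
  interpret finite_measure M by fact
  have pp: "p > 0" using p2 by simp
  have PB: "integrable M (\<lambda>x. a x powr p)" "m * N powr p = integral\<^sup>L M (\<lambda>x. a x powr p)" "1/p \<le> N"
    using pairing_bound[OF fm mpos p2 fmeas fint] unfolding m_def a_def N_def by auto
  have Afin: "emeasure M A < top" using emeasure_finite[of A] by (simp add: less_top[symmetric])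
  have af: "a x > 0" "a x \<ge> \<bar>f x\<bar>" for x
    unfolding a_def using regabs_facts[OF pp] by auto
  have Npos: "N > 0" using PB(3) pp by (smt (verit) divide_pos_pos)
  define c where "c = l * N"
  have cpos: "c > 0" unfolding c_def using lpos Npos by simp
  have pt: "\<bar>f x * g x\<bar> \<le> c * indicator A x + a x powr p / c powr (p-1)" if "x \<in> space M" for x
  proof (cases "x \<in> A")
    case True
    have "\<bar>g x\<bar> \<le> 1" using gle[OF that] True by simp
    then have "\<bar>f x\<bar> * \<bar>g x\<bar> \<le> a x * 1" using af[of x] by (intro mult_mono) auto
    then have "\<bar>f x * g x\<bar> \<le> a x" by (simp add: abs_mult)
    also have "\<dots> \<le> c + a x powr p / c powr (p-1)" using af[of x] cpos p2 by (intro small_le) auto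
    finally show ?thesis using True by simp
  next
    case False
    then show ?thesis using gle[OF that] by simp
  qed
  have bint: "integrable M (\<lambda>x. c * indicator A x + a x powr p / c powr (p-1))"
    using PB(1) by (intro Bochner_Integration.integrable_add integrable_mult_right integrable_divide)
      (auto intro!: integrable_real_indicator Afin)
  have "integral\<^sup>L M (\<lambda>x. f x * g x) \<le> integral\<^sup>L M (\<lambda>x. c * indicator A x + a x powr p / c powr (p-1))"
  proof (rule integral_mono_AE)
    show "integrable M (\<lambda>x. f x * g x)"
    proof (rule Bochner_Integration.integrable_bound[OF bint])
      show "(\<lambda>x. f x * g x) \<in> borel_measurable M" by measurable
      show "AE x in M. norm (f x * g x) \<le> norm (c * indicator A x + a x powr p / c powr (p-1))"
      proof (rule AE_I2)
        fix x assume x: "x \<in> space M"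
        have "0 \<le> c * indicator A x + a x powr p / c powr (p-1)" using cpos by simp
        then show "norm (f x * g x) \<le> norm (c * indicator A x + a x powr p / c powr (p-1))"
          using pt[OF x] by simp
      qed
    qed
    show "integrable M (\<lambda>x. c * indicator A x + a x powr p / c powr (p-1))" by (fact bint)
    show "AE x in M. f x * g x \<le> c * indicator A x + a x powr p / c powr (p-1)"
      using pt by (intro AE_I2) (metis abs_ge_self order_trans)
  qed
  also have "\<dots> = c * measure M A + m * N powr p / c powr (p-1)"
    using PB(1) PB(2) Afin Asets by (simp add: sets.Int_space_eq2)
  also have "\<dots> = N * (l * measure M A + m / l powr (p-1))"
  proof -
    have "c powr (p-1) = l powr (p-1) * N powr (p-1)" unfolding c_def using lpos Npos by (simp add: powr_mult)
    moreover have "N powr p = N * N powr (p-1)"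
    proof -
      have "N powr p = N powr (1 + (p-1))" by simp
      also have "\<dots> = N * N powr (p-1)" using Npos by (simp only: powr_add powr_one)
      finally show ?thesis .
    qed
    moreover have "N powr (p-1) > 0" "l powr (p-1) > 0" using Npos lpos by auto
    ultimately show ?thesis unfolding c_def using Npos lpos by (simp only: alg3)
  qed
  finally show ?thesis .
qed

lemma conv_int:
  fixes h :: "'a::euclidean_space \<Rightarrow> real"
  assumes "\<Omega> \<in> sets lebesgue"
  shows "set_lebesgue_integral lebesgue \<Omega> h = integral\<^sup>L (restrict_space lebesgue \<Omega>) h"
  using integral_restrict_space[of \<Omega> lebesgue h] assms by (simp add: set_lebesgue_integral_def)

lemma conv_Lp:
  assumes "\<Omega> \<in> sets lebesgue"
  shows "in_Lp \<Omega> q f \<longleftrightarrow> f \<in> borel_measurable (restrict_space lebesgue \<Omega>) \<and>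
    integrable (restrict_space lebesgue \<Omega>) (\<lambda>x. \<bar>f x\<bar> powr q)"
  using assms unfolding in_Lp_def set_borel_measurable_def
  by (simp add: borel_measurable_restrict_space_iff set_integrable_eq)

theorem mainTheorem12:
  fixes \<Omega> :: "'a::euclidean_space set"
    and p :: "nat \<Rightarrow> real"
    and \<xi> :: "nat \<Rightarrow> 'a \<Rightarrow> real"
    and \<xi>inf :: "'a \<Rightarrow> real"
  assumes "bounded \<Omega>" and "open \<Omega>"
    and "filterlim p at_top sequentially"
    and "\<And>j. p j > 1"
    and "\<And>j. in_Lp \<Omega> (p j) (\<xi> j)"
    and "\<And>j. AE x in lebesgue. x \<in> \<Omega> \<longrightarrow> \<xi> j x \<ge> 0"
    and "in_Linf \<Omega> \<xi>inf"
    and "\<And>k. 1 < k \<Longrightarrow> weak_conv_Lk \<Omega> k \<xi> \<xi>inf"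
  shows "liminf (\<lambda>j. ereal (mu_pairing \<Omega> (p j) (\<xi> j))) \<ge> Linf_norm \<Omega> \<xi>inf"
proof -
  note bnd = assms(1) and opn = assms(2) and plim = assms(3) and p1 = assms(4)
    and xiLp = assms(5) and Linf = assms(7) and weak = assms(8)
  have Oml: "\<Omega> \<in> lmeasurable" using lmeasurable_open[OF bnd opn] .
  have Os[measurable]: "\<Omega> \<in> sets lebesgue" using Oml by auto
  have Ofin: "emeasure lebesgue \<Omega> \<noteq> top" using fmeasurableD2[OF Oml] .
  define M where "M = restrict_space lebesgue \<Omega>"
  have spM: "space M = \<Omega>" unfolding M_def by (simp add: space_restrict_space)
  have Oint: "\<Omega> \<inter> space lebesgue \<in> sets lebesgue" using Os by simp
  have emM: "emeasure M (space M) = emeasure lebesgue \<Omega>" unfolding spM unfolding M_def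
    using Oint by (simp add: emeasure_restrict_space)
  have fm: "finite_measure M" using emM Ofin by (intro finite_measureI) simp
  interpret finite_measure M by fact
  define mM where "mM = measure lebesgue \<Omega>"
  have mMeq: "measure M (space M) = mM" unfolding spM unfolding M_def mM_def
    using Oint by (simp add: measure_restrict_space)
  have convI: "set_lebesgue_integral lebesgue \<Omega> h = integral\<^sup>L M h" for h :: "'a \<Rightarrow> real"
    unfolding M_def by (rule conv_int[OF Os])
  have convL: "in_Lp \<Omega> q f \<longleftrightarrow> f \<in> borel_measurable M \<and> integrable M (\<lambda>x. \<bar>f x\<bar> powr q)" for q f
    unfolding M_def by (rule conv_Lp[OF Os])
  have xim[measurable]: "\<xi> j \<in> borel_measurable M" and xiint: "integrable M (\<lambda>x. \<bar>\<xi> j x\<bar> powr p j)" for j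
    using xiLp[of j] convL by auto
  define N where "N = (\<lambda>j. dotLp \<Omega> (p j) (\<xi> j))"
  have Nj: "N j = ((1/mM) * integral\<^sup>L M (\<lambda>x. regabs (p j) (\<xi> j x) powr p j)) powr (1 / p j)" for j
    unfolding N_def dotLp_def convI mM_def ..
  define mu where "mu = (\<lambda>j. mu_pairing \<Omega> (p j) (\<xi> j))"
  have muj: "mu j = integral\<^sup>L M (\<lambda>x. \<xi> j x * (regabs (p j) (\<xi> j x) powr (p j - 2) * \<xi> j x / (mM * N j powr (p j - 1))))" for j
    unfolding mu_def mu_pairing_def convI N_def mM_def ..
  have mu_nonneg: "0 \<le> mu j" for j
  proof -
    have "0 \<le> \<xi> j x * (regabs (p j) (\<xi> j x) powr (p j - 2) * \<xi> j x / (mM * N j powr (p j - 1)))" for x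
    proof -
      have eq: "\<xi> j x * (regabs (p j) (\<xi> j x) powr (p j - 2) * \<xi> j x / (mM * N j powr (p j - 1)))
        = regabs (p j) (\<xi> j x) powr (p j - 2) * (\<xi> j x * \<xi> j x) / (mM * N j powr (p j - 1))"
        by (simp add: algebra_simps)
      have "0 \<le> mM" unfolding mM_def by simp
      then have "0 \<le> regabs (p j) (\<xi> j x) powr (p j - 2) * (\<xi> j x * \<xi> j x) / (mM * N j powr (p j - 1))"
        by (rule divide_nonneg_nonneg[OF mult_nonneg_nonneg[OF powr_ge_zero zero_le_square] mult_nonneg_nonneg[OF _ powr_ge_zero]])
      then show ?thesis unfolding eq .
    qed
    note nn = this
    show ?thesis unfolding muj by (rule integral_nonneg_AE, rule AE_I2, rule nn)
  qed
  have lim0: "0 \<le> liminf (\<lambda>j. ereal (mu j))"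
    by (intro Liminf_bounded always_eventually) (simp add: mu_nonneg)
  have xinfm[measurable]: "\<xi>inf \<in> borel_measurable M"
    using Linf unfolding in_Linf_def set_borel_measurable_def M_def
    by (simp add: borel_measurable_restrict_space_iff)
  obtain C where C: "AE x in M. \<bar>\<xi>inf x\<bar> \<le> C"
    using Linf unfolding in_Linf_def M_def by (auto simp: AE_restrict_space_iff[OF Oint])
  have Linfeq: "Linf_norm \<Omega> \<xi>inf = esssup M (\<lambda>x. ereal \<bar>\<xi>inf x\<bar>)"
    unfolding Linf_norm_def M_def ..
  have main: "Linf_norm \<Omega> \<xi>inf \<le> liminf (\<lambda>j. ereal (mu j))"
  proof (rule dense_le)
    fix y assume y: "y < Linf_norm \<Omega> \<xi>inf"
    show "y \<le> liminf (\<lambda>j. ereal (mu j))"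
    proof (cases "y \<le> 0")
      case True then show ?thesis using lim0 by (rule order_trans)
    next
      case False
      obtain z where yz: "y < z" "z < Linf_norm \<Omega> \<xi>inf" using y dense by blast
      obtain t where yt: "y = ereal t" using False yz by (cases y) auto
      obtain s where zs: "z = ereal s" using yz by (cases z) auto
      have t0: "0 < t" using False yt by simp
      have ts: "t < s" using yz yt zs by simp
      have "emeasure M {x \<in> space M. ereal s < ereal \<bar>\<xi>inf x\<bar>} > 0"
        using esssup_pos_measure[of "\<lambda>x. ereal \<bar>\<xi>inf x\<bar>" M s] yz zs Linfeq by auto
      define A where "A = {x \<in> space M. s < \<bar>\<xi>inf x\<bar>}"
      have Asets[measurable]: "A \<in> sets M" unfolding A_def by measurable
      have "emeasure M A > 0" using \<open>emeasure M _ > 0\<close> unfolding A_def by simp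
      define al where "al = measure M A"
      have alpos: "al > 0" using \<open>emeasure M A > 0\<close> unfolding al_def
        by (simp add: emeasure_eq_measure)
      have mpos: "0 < measure M (space M)"
      proof -
        have "al \<le> measure M (space M)" unfolding al_def by (rule bounded_measure)
        then show ?thesis using alpos by simp
      qed
      define s1 where "s1 = (t + s) / 2"
      define u where "u = (t + s1) / 2"
      define l where "l = (s1 / u + 1) / 2"
      have s1: "t < s1" "s1 < s" unfolding s1_def using ts by auto
      have u: "t < u" "u < s1" "0 < u" unfolding u_def using s1 t0 by auto
      have su: "1 < s1 / u" using u by simp
      have lr: "1 < r \<Longrightarrow> 1 < (r + 1) / 2 \<and> (r + 1) / 2 < r" for r :: real by (simp add: field_simps)
      have l1: "1 < l" unfolding l_def using lr[OF su] by blast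
      have l2: "l < s1 / u" unfolding l_def using lr[OF su] by blast
      note l = l1 l2
      define g where "g = (\<lambda>x. indicator A x * sgn (\<xi>inf x) :: real)"
      have gm[measurable]: "g \<in> borel_measurable M" unfolding g_def by measurable
      have gle: "\<bar>g x\<bar> \<le> indicator A x" for x unfolding g_def
        by (cases "x \<in> A") (auto simp: abs_sgn_eq)
      have gLp: "in_Lp \<Omega> (2 / (2 - 1)) g"
        unfolding convL
      proof
        show "g \<in> borel_measurable M" by (fact gm)
        show "integrable M (\<lambda>x. \<bar>g x\<bar> powr (2 / (2 - 1)))"
        proof (rule integrable_const_bound[where B=1])
          show "AE x in M. norm (\<bar>g x\<bar> powr (2 / (2 - 1))) \<le> 1"
          proof (intro AE_I2)
            fix x
            have "\<bar>g x\<bar> \<le> 1" using gle[of x] by (cases "x \<in> A") auto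
            then have "\<bar>g x\<bar> powr 2 \<le> 1 powr 2" by (intro powr_mono2) auto
            then show "norm (\<bar>g x\<bar> powr (2 / (2 - 1))) \<le> 1" by simp
          qed
        qed measurable
      qed
      have conv: "(\<lambda>j. integral\<^sup>L M (\<lambda>x. \<xi> j x * g x)) \<longlonglongrightarrow> integral\<^sup>L M (\<lambda>x. \<xi>inf x * g x)"
        using weak[of 2] gLp unfolding weak_conv_Lk_def convI by auto
      have lb: "s * al \<le> integral\<^sup>L M (\<lambda>x. \<xi>inf x * g x)"
      proof -
        have "integral\<^sup>L M (\<lambda>x. s * indicator A x) \<le> integral\<^sup>L M (\<lambda>x. \<xi>inf x * g x)"
        proof (rule integral_mono)
          show "integrable M (\<lambda>x. s * indicator A x)" by (intro integrable_mult_right) (auto simp: emeasure_finite less_top[symmetric])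
          show "integrable M (\<lambda>x. \<xi>inf x * g x)"
          proof (rule integrable_const_bound[where B=C])
            show "AE x in M. norm (\<xi>inf x * g x) \<le> C"
              using C
            proof (rule eventually_mono)
              fix x assume "\<bar>\<xi>inf x\<bar> \<le> C"
              moreover have "\<bar>g x\<bar> \<le> 1" using gle[of x] by (cases "x \<in> A") auto
              ultimately have "\<bar>\<xi>inf x\<bar> * \<bar>g x\<bar> \<le> C * 1" by (intro mult_mono) auto
              then show "norm (\<xi>inf x * g x) \<le> C" by (simp add: abs_mult)
            qed
          qed measurable
          fix x assume "x \<in> space M"
          show "s * indicator A x \<le> \<xi>inf x * g x"
          proof (cases "x \<in> A")
            case True
            then have "s < \<bar>\<xi>inf x\<bar>" unfolding A_def by auto
            moreover have "\<xi>inf x * sgn (\<xi>inf x) = \<bar>\<xi>inf x\<bar>" by (simp add: sgn_if abs_if)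
            ultimately show ?thesis using True unfolding g_def by simp
          next
            case False then show ?thesis unfolding g_def by simp
          qed
        qed
        moreover have "integral\<^sup>L M (\<lambda>x. s * indicator A x) = s * al"
          unfolding al_def using Asets by (simp add: sets.Int_space_eq2)
        ultimately show ?thesis by (simp add: al_def)
      qed
      have "s1 * al < s * al" using s1 alpos by simp
      then have ev1: "\<forall>\<^sub>F j in sequentially. s1 * al < integral\<^sup>L M (\<lambda>x. \<xi> j x * g x)"
        using order_tendstoD(1)[OF conv] lb by (meson less_le_trans)
      have ev2: "\<forall>\<^sub>F j in sequentially. max 2 (2 / (u - t)) \<le> p j"
        using plim unfolding filterlim_at_top by blast
      define K where "K = mM / (al * (s1 / u - l))"
      have ev3: "\<forall>\<^sub>F j in sequentially. K \<le> l powr (p j - 1)"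
        using powr_tendsto[OF l(1) plim] unfolding filterlim_at_top by blast
      have Kpos: "0 < K" unfolding K_def using mpos mMeq alpos l by simp
      have "\<forall>\<^sub>F j in sequentially. ereal t \<le> ereal (mu j)"
        using ev1 ev2 ev3
      proof (eventually_elim)
        case (elim j)
        have p2: "2 \<le> p j" using elim(2) by simp
        have pu: "2 / (u - t) \<le> p j" using elim(2) by simp
        have LN: "integral\<^sup>L M (\<lambda>x. \<xi> j x * g x) \<le> N j * (l * al + mM / l powr (p j - 1))"
          using lower_N[OF fm mpos p2 xim xiint Asets gm _ _, of l] gle l
          unfolding Nj mMeq al_def by auto
        have lp: "0 < l powr (p j - 1)" using l by simp
        have "mM / l powr (p j - 1) \<le> al * (s1 / u - l)"
        proof -
          have "mM \<le> al * (s1 / u - l) * l powr (p j - 1)"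
            using elim(3) Kpos alpos l unfolding K_def by (simp add: divide_le_eq mult.commute)
          then show ?thesis using lp by (simp add: divide_le_eq)
        qed
        moreover have "0 \<le> N j" unfolding N_def dotLp_def by simp
        ultimately have "N j * (l * al + mM / l powr (p j - 1)) \<le> N j * (l * al + al * (s1 / u - l))"
          by (intro mult_left_mono) auto
        also have "\<dots> = N j * al * s1 / u" by (simp add: algebra_simps)
        finally have "s1 * al < N j * al * s1 / u" using elim(1) LN by linarith
        then have "s1 * al * u < N j * (s1 * al)" using u by (simp add: field_simps)
        then have uN: "u < N j" using s1 t0 alpos by (simp add: mult.commute)
        have PB: "N j - 2 / p j \<le> mu j"
          using pairing_bound(4)[OF fm mpos p2 xim xiint] unfolding muj Nj mMeq by simp
        have "2 / p j \<le> u - t" using pu u p2 by (simp add: field_simps)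
        then show ?case using uN PB by simp
      qed
      then show ?thesis unfolding yt by (rule Liminf_bounded)
    qed
  qed
  then show ?thesis unfolding mu_def by simp
qed

end
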